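(* Let $B\subset\mathbb R^2$ be a closed Euclidean ball of positive radius, and let $T\subset\mathbb R^2$ be a closed non-degenerate (filled) triangle. Then $S(B)=S(T)=\{(0,0)\}$. Consequently, neither $B$ nor $T$ is the achievement set $E(v_n)$ of any sequence $(v_n)$ in $\mathbb R^2$ with $\sum_n v_n$ absolutely convergent.
   Context: For an absolutely convergent series $\sum_n v_n$ in $\mathbb R^2$, its achievement set is $E(v_n)=\{\sum_{n=1}^\infty \varepsilon_n v_n : (\varepsilon_n)\in\{0,1\}^{\mathbb N}\}$. For $A\subset\mathbb R^2$, the spectre of $A$ is $S(A)=\{x\in \mathbb R^2:\ \forall y\in A,\ y+x\in A\text{ or }y-x\in A\}$. *)

theory Defs
  imports "HOL-Analysis.Analysis"
begin

definition achievement_set :: "(nat \<Rightarrow> real^2) \<Rightarrow> (real^2) set" where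
  "achievement_set v = {(\<Sum>n. eps n *\<^sub>R v n) | eps. \<forall>n. eps n \<in> {0::real, 1}}"

definition spectre :: "(real^2) set \<Rightarrow> (real^2) set" where
  "spectre A = {x. \<forall>y\<in>A. y + x \<in> A \<or> y - x \<in> A}"

end

theory Submission
  imports Defs
begin

lemma indep2:
  fixes a b d :: "real^2"
  assumes "\<not> collinear {a, b, d}"
    and "p *\<^sub>R (b - a) + q *\<^sub>R (d - a) = p' *\<^sub>R (b - a) + q' *\<^sub>R (d - a)"
  shows "p = p' \<and> q = q'"
proof -
  have nc: "\<not> collinear {0, b - a, d - a}"
    using assms(1) collinear_3[of b a d] by (simp add: insert_commute)
  have e: "(p - p') *\<^sub>R (b - a) + (q - q') *\<^sub>R (d - a) = 0"
    using assms(2) by (simp add: algebra_simps)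
  have "p - p' = 0"
  proof (rule ccontr)
    assume h: "p - p' \<noteq> 0"
    have e1: "(p - p') *\<^sub>R (b - a) = (- (q - q')) *\<^sub>R (d - a)"
      using e by (metis add_eq_0_iff2 scaleR_minus_left)
    have "b - a = inverse (p - p') *\<^sub>R ((p - p') *\<^sub>R (b - a))" using h by simp
    also have "\<dots> = (- (q - q') / (p - p')) *\<^sub>R (d - a)" using e1 by (simp add: divide_inverse mult.commute)
    finally have "b - a = (- (q - q') / (p - p')) *\<^sub>R (d - a)" .
    then show False using nc collinear_lemma[of "d - a" "b - a"]
      by (metis insert_commute)
  qed
  moreover have "q - q' = 0"
  proof (rule ccontr)
    assume h: "q - q' \<noteq> 0"
    have e1: "(q - q') *\<^sub>R (d - a) = (- (p - p')) *\<^sub>R (b - a)"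
      using e by (metis add_eq_0_iff2 add.commute scaleR_minus_left)
    have "d - a = inverse (q - q') *\<^sub>R ((q - q') *\<^sub>R (d - a))" using h by simp
    also have "\<dots> = (- (p - p') / (q - q')) *\<^sub>R (b - a)" using e1 by (simp add: divide_inverse mult.commute)
    finally have "d - a = (- (p - p') / (q - q')) *\<^sub>R (b - a)" .
    then show False using nc collinear_lemma[of "b - a" "d - a"] by blast
  qed
  ultimately show ?thesis by simp
qed

lemma hull3:
  fixes a b d z :: "real^2"
  assumes "z \<in> convex hull {a, b, d}"
  obtains u v where "0 \<le> u" "0 \<le> v" "u + v \<le> 1" "z = a + u *\<^sub>R (b - a) + v *\<^sub>R (d - a)"
  using assms unfolding convex_hull_3_alt by blast

lemma tri_spec:
  fixes a b d :: "real^2"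
  assumes nc: "\<not> collinear {a, b, d}"
  shows "spectre (convex hull {a, b, d}) = {0}"
proof
  show "{0} \<subseteq> spectre (convex hull {a, b, d})" by (auto simp: spectre_def)
next
  show "spectre (convex hull {a, b, d}) \<subseteq> {0}"
  proof
    fix x assume x: "x \<in> spectre (convex hull {a, b, d})"
    define T where "T = convex hull {a, b, d}"
    have aT: "a \<in> T" "b \<in> T" "d \<in> T" unfolding T_def by (auto intro: hull_inc)
    have xs: "\<And>y. y \<in> T \<Longrightarrow> y + x \<in> T \<or> y - x \<in> T" using x unfolding spectre_def T_def by blast
    have A: "\<exists>p q. x = p *\<^sub>R (b - a) + q *\<^sub>R (d - a) \<and> (p \<ge> 0 \<and> q \<ge> 0 \<or> p \<le> 0 \<and> q \<le> 0)"
    proof (cases "a + x \<in> T")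
      case True
      then obtain u v where uv: "0 \<le> u" "0 \<le> v" "u + v \<le> 1" "a + x = a + u *\<^sub>R (b - a) + v *\<^sub>R (d - a)"
        unfolding T_def by (rule hull3)
      then show ?thesis by (intro exI[of _ u] exI[of _ v]) auto
    next
      case False
      then have "a - x \<in> T" using xs aT by blast
      then obtain u v where uv: "0 \<le> u" "0 \<le> v" "u + v \<le> 1" "a - x = a + u *\<^sub>R (b - a) + v *\<^sub>R (d - a)"
        unfolding T_def by (rule hull3)
      then have "x = (-u) *\<^sub>R (b - a) + (-v) *\<^sub>R (d - a)" by (simp add: algebra_simps)
      then show ?thesis using uv by (intro exI[of _ "-u"] exI[of _ "-v"]) auto
    qed
    have B: "\<exists>p q. x = p *\<^sub>R (b - a) + q *\<^sub>R (d - a) \<and> (p + q \<le> 0 \<and> q \<ge> 0 \<or> p + q \<ge> 0 \<and> q \<le> 0)"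
    proof (cases "b + x \<in> T")
      case True
      then obtain u v where uv: "0 \<le> u" "0 \<le> v" "u + v \<le> 1" "b + x = a + u *\<^sub>R (b - a) + v *\<^sub>R (d - a)"
        unfolding T_def by (rule hull3)
      then have "x = (u - 1) *\<^sub>R (b - a) + v *\<^sub>R (d - a)" by (simp add: algebra_simps)
      then show ?thesis using uv by (intro exI[of _ "u - 1"] exI[of _ v]) auto
    next
      case False
      then have "b - x \<in> T" using xs aT by blast
      then obtain u v where uv: "0 \<le> u" "0 \<le> v" "u + v \<le> 1" "b - x = a + u *\<^sub>R (b - a) + v *\<^sub>R (d - a)"
        unfolding T_def by (rule hull3)
      then have "x = (1 - u) *\<^sub>R (b - a) + (-v) *\<^sub>R (d - a)" by (simp add: algebra_simps)
      then show ?thesis using uv by (intro exI[of _ "1 - u"] exI[of _ "-v"]) auto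
    qed
    have D: "\<exists>p q. x = p *\<^sub>R (b - a) + q *\<^sub>R (d - a) \<and> (p + q \<le> 0 \<and> p \<ge> 0 \<or> p + q \<ge> 0 \<and> p \<le> 0)"
    proof (cases "d + x \<in> T")
      case True
      then obtain u v where uv: "0 \<le> u" "0 \<le> v" "u + v \<le> 1" "d + x = a + u *\<^sub>R (b - a) + v *\<^sub>R (d - a)"
        unfolding T_def by (rule hull3)
      then have "x = u *\<^sub>R (b - a) + (v - 1) *\<^sub>R (d - a)" by (simp add: algebra_simps)
      then show ?thesis using uv by (intro exI[of _ u] exI[of _ "v - 1"]) auto
    next
      case False
      then have "d - x \<in> T" using xs aT by blast
      then obtain u v where uv: "0 \<le> u" "0 \<le> v" "u + v \<le> 1" "d - x = a + u *\<^sub>R (b - a) + v *\<^sub>R (d - a)"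
        unfolding T_def by (rule hull3)
      then have "x = (-u) *\<^sub>R (b - a) + (1 - v) *\<^sub>R (d - a)" by (simp add: algebra_simps)
      then show ?thesis using uv by (intro exI[of _ "-u"] exI[of _ "1 - v"]) auto
    qed
    obtain p1 q1 where 1: "x = p1 *\<^sub>R (b - a) + q1 *\<^sub>R (d - a)" "p1 \<ge> 0 \<and> q1 \<ge> 0 \<or> p1 \<le> 0 \<and> q1 \<le> 0"
      using A by blast
    obtain p2 q2 where 2: "x = p2 *\<^sub>R (b - a) + q2 *\<^sub>R (d - a)" "p2 + q2 \<le> 0 \<and> q2 \<ge> 0 \<or> p2 + q2 \<ge> 0 \<and> q2 \<le> 0"
      using B by blast
    obtain p3 q3 where 3: "x = p3 *\<^sub>R (b - a) + q3 *\<^sub>R (d - a)" "p3 + q3 \<le> 0 \<and> p3 \<ge> 0 \<or> p3 + q3 \<ge> 0 \<and> p3 \<le> 0"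
      using D by blast
    have e12: "p1 = p2 \<and> q1 = q2" using indep2[OF nc] 1(1) 2(1) by metis
    have e13: "p1 = p3 \<and> q1 = q3" using indep2[OF nc] 1(1) 3(1) by metis
    have "p1 = 0 \<and> q1 = 0" using 1(2) 2(2) 3(2) e12 e13 by linarith
    then show "x \<in> {0}" using 1(1) by simp
  qed
qed

lemma ball_spec:
  fixes c :: "real^2" and r :: real
  assumes r: "r > 0"
  shows "spectre (cball c r) = {0}"
proof
  show "{0} \<subseteq> spectre (cball c r)" by (auto simp: spectre_def)
next
  show "spectre (cball c r) \<subseteq> {0}"
  proof
    fix x assume x: "x \<in> spectre (cball c r)"
    show "x \<in> {0}"
    proof (rule ccontr)
      assume "x \<notin> {0}"
      then have x0: "x \<noteq> 0" by simp
      obtain u :: "real^2" where u: "u \<noteq> 0" "orthogonal x u"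
        using orthogonal_to_vector_exists[of x] by auto
      define w where "w = (r / norm u) *\<^sub>R u"
      have nw: "norm w = r" using u r by (simp add: w_def)
      have ow: "orthogonal w x" "orthogonal w (-x)" using u(2) unfolding w_def
        by (auto simp: orthogonal_def inner_commute)
      have "c + w \<in> cball c r" using nw by (simp add: dist_norm)
      then have "c + w + x \<in> cball c r \<or> c + w - x \<in> cball c r"
        using x unfolding spectre_def by blast
      then have "norm (w + x) \<le> r \<or> norm (w + - x) \<le> r"
      proof
        assume "c + w + x \<in> cball c r"
        then have "dist c (c + (w + x)) \<le> r" by (simp add: add.assoc)
        then have "norm (- w - x) \<le> r" by (simp add: dist_norm)
        moreover have "- w - x = - (w + x)" by simp
        ultimately show ?thesis by (metis norm_minus_cancel)
      next
        assume "c + w - x \<in> cball c r"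
        then have "dist c (c + (w + - x)) \<le> r" by (simp add: algebra_simps)
        then have "norm (w + - x) \<le> r" by (simp only: dist_norm) (metis add_diff_cancel_left' diff_0 minus_diff_eq norm_minus_commute)
        then show ?thesis by simp
      qed
      moreover have "norm x > 0" using x0 by simp
      moreover have "(norm (w + x))\<^sup>2 = r\<^sup>2 + (norm x)\<^sup>2"
        using norm_add_Pythagorean[OF ow(1)] nw by simp
      moreover have "(norm (w + - x))\<^sup>2 = r\<^sup>2 + (norm x)\<^sup>2"
        using norm_add_Pythagorean[OF ow(2)] nw by simp
      ultimately have "norm (w + x) \<le> r \<and> (norm (w + x))\<^sup>2 = r\<^sup>2 + (norm x)\<^sup>2 \<and> norm x > 0
                       \<or> norm (w + - x) \<le> r \<and> (norm (w + - x))\<^sup>2 = r\<^sup>2 + (norm x)\<^sup>2 \<and> norm x > 0"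
        by blast
      then show False using r
        by (smt (verit, best) norm_ge_zero power_mono zero_less_power)
    qed
  qed
qed

lemma ach_spec:
  fixes v :: "nat \<Rightarrow> real^2"
  assumes s: "summable (\<lambda>n. norm (v n))"
  shows "v n \<in> spectre (achievement_set v)"
  unfolding spectre_def
proof (intro CollectI ballI)
  fix y assume "y \<in> achievement_set v"
  then obtain eps where y: "y = (\<Sum>k. eps k *\<^sub>R v k)" and e: "\<forall>k. eps k \<in> {0::real, 1}"
    unfolding achievement_set_def by blast
  have sm: "summable (\<lambda>k. eps k *\<^sub>R v k)"
  proof (rule summable_comparison_test[OF _ s])
    show "\<exists>N. \<forall>k\<ge>N. norm (eps k *\<^sub>R v k) \<le> norm (v k)"
      proof (intro exI[of _ 0] allI impI)
        fix k show "norm (eps k *\<^sub>R v k) \<le> norm (v k)" using e[rule_format, of k] by auto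
      qed
  qed
  have ys: "(\<lambda>k. eps k *\<^sub>R v k) sums y" using sm y by (simp add: summable_sums)
  have ss: "(\<lambda>k. if k = n then v k else 0) sums v n" by (rule sums_single)
  show "y + v n \<in> achievement_set v \<or> y - v n \<in> achievement_set v"
  proof (cases "eps n = 0")
    case True
    define eps' where "eps' = eps(n := 1)"
    have "(\<lambda>k. eps k *\<^sub>R v k + (if k = n then v k else 0)) sums (y + v n)"
      by (rule sums_add[OF ys ss])
    moreover have "(\<lambda>k. eps k *\<^sub>R v k + (if k = n then v k else 0)) = (\<lambda>k. eps' k *\<^sub>R v k)"
      using True by (auto simp: eps'_def)
    ultimately have "y + v n = (\<Sum>k. eps' k *\<^sub>R v k)" by (simp add: sums_iff)
    moreover have "\<forall>k. eps' k \<in> {0::real, 1}" using e by (auto simp: eps'_def)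
    ultimately show ?thesis unfolding achievement_set_def by blast
  next
    case False
    then have e1: "eps n = 1" using e by auto
    define eps' where "eps' = eps(n := 0)"
    have "(\<lambda>k. eps k *\<^sub>R v k - (if k = n then v k else 0)) sums (y - v n)"
      by (rule sums_diff[OF ys ss])
    moreover have "(\<lambda>k. eps k *\<^sub>R v k - (if k = n then v k else 0)) = (\<lambda>k. eps' k *\<^sub>R v k)"
      using e1 by (auto simp: eps'_def)
    ultimately have "y - v n = (\<Sum>k. eps' k *\<^sub>R v k)" by (simp add: sums_iff)
    moreover have "\<forall>k. eps' k \<in> {0::real, 1}" using e by (auto simp: eps'_def)
    ultimately show ?thesis unfolding achievement_set_def by blast
  qed
qed

lemma ach_sub:
  fixes v :: "nat \<Rightarrow> real^2"
  assumes s: "summable (\<lambda>n. norm (v n))" and A: "achievement_set v = A" and sp: "spectre A = {0}"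
  shows "A \<subseteq> {0}"
proof -
  have "\<And>n. v n = 0" using ach_spec[OF s] A sp by blast
  then show ?thesis using A unfolding achievement_set_def by auto
qed

theorem mainTheorem18:
  fixes c a b d :: "real^2" and r :: real
  assumes "r > 0"
    and "\<not> collinear {a, b, d}"
  shows "spectre (cball c r) = {0}
    \<and> spectre (convex hull {a, b, d}) = {0}
    \<and> (\<forall>v :: nat \<Rightarrow> real^2. summable (\<lambda>n. norm (v n)) \<longrightarrow>
          achievement_set v \<noteq> cball c r \<and> achievement_set v \<noteq> convex hull {a, b, d})"
proof (intro conjI allI impI)
  show sb: "spectre (cball c r) = {0}" using ball_spec[OF assms(1)] .
  show st: "spectre (convex hull {a, b, d}) = {0}" using tri_spec[OF assms(2)] .
  fix v :: "nat \<Rightarrow> real^2" assume s: "summable (\<lambda>n. norm (v n))"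
  show "achievement_set v \<noteq> cball c r"
  proof
    assume h: "achievement_set v = cball c r"
    have "cball c r \<subseteq> {0}" using ach_sub[OF s h sb] .
    moreover obtain e :: "real^2" where "norm e = 1" using vector_choose_size[of 1] by auto
    moreover have "c \<in> cball c r" "c + r *\<^sub>R e \<in> cball c r" using assms(1) \<open>norm e = 1\<close>
      by (auto simp: dist_norm)
    ultimately have "c = 0" "c + r *\<^sub>R e = 0" by (metis singletonD subsetD)+
    then have "r *\<^sub>R e = 0" by simp
    then show False using assms(1) \<open>norm e = 1\<close> by auto
  qed
  show "achievement_set v \<noteq> convex hull {a, b, d}"
  proof
    assume h: "achievement_set v = convex hull {a, b, d}"
    have "convex hull {a, b, d} \<subseteq> {0}" using ach_sub[OF s h st] .
    then have "a = 0" "b = 0" "d = 0" by (auto dest: subsetD intro: hull_inc)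
    then show False using assms(2) by (simp add: collinear_2)
  qed
qed

end
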